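(* Let $c\in\mathbb{R}\setminus\{0\}$ and let $\boldsymbol\eta_c:\mathbb{R}^2\to\mathbb{R}^2$ be $$\boldsymbol\eta_c(u,v)=\bigl(u^2+2cv,\ v^2+2cu\bigr).$$ Let $\mathbf y=(s_1,s_2)$ be a point in the four-image region of $\boldsymbol\eta_c$, i.e. the equation $\boldsymbol\eta_c(\mathbf x)=\mathbf y$ has exactly four distinct solutions $\mathbf x_i=(u_i,v_i)\in\mathbb{R}^2$, $i=1,\dots,4$, each with $\det(\mathrm{Jac}\,\boldsymbol\eta_c)(\mathbf x_i)\neq0$. Then, with $\mu_i=1/\det(\mathrm{Jac}\,\boldsymbol\eta_c)(\mathbf x_i)=\frac{1}{4(u_iv_i-c^2)}$, $$\mu_1+\mu_2+\mu_3+\mu_4=0.$$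
   Context: This map is the universal quantitative form of a one-parameter family of gravitational lensing maps near a hyperbolic umbilic caustic. Its critical curve is $uv=c^2$, and its caustic is $s_1=u^2+2c^3/u$, $s_2=2cu+c^4/u^2$; the four-image region is the region "inside the beak" of this caustic, where sources have exactly four preimages. *)

theory Defs
  imports Complex_Main
begin

definition eta :: "real \<Rightarrow> real \<times> real \<Rightarrow> real \<times> real" where
  "eta c = (\<lambda>(u, v). (u^2 + 2*c*v, v^2 + 2*c*u))"

text \<open>Determinant of the Jacobian matrix [[2u, 2c], [2c, 2v]] of eta c at (u,v).\<close>
definition jac_det :: "real \<Rightarrow> real \<times> real \<Rightarrow> real" where
  "jac_det c = (\<lambda>(u, v). (2*u) * (2*v) - (2*c) * (2*c))"

end

theory Submission imports Defs begin
lemma key: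
  fixes r1 r2 r3 r4 a b e :: real
  assumes d: "r1\<noteq>r2" "r1\<noteq>r3" "r1\<noteq>r4" "r2\<noteq>r3" "r2\<noteq>r4" "r3\<noteq>r4"
  and p: "r1^4 + a*r1^2 + b*r1 + e = 0" "r2^4 + a*r2^2 + b*r2 + e = 0"
         "r3^4 + a*r3^2 + b*r3 + e = 0" "r4^4 + a*r4^2 + b*r4 + e = 0"
  shows "1/(4*r1^3+2*a*r1+b) + 1/(4*r2^3+2*a*r2+b) + 1/(4*r3^3+2*a*r3+b) + 1/(4*r4^3+2*a*r4+b) = 0"
proof -
  define Q where "Q = (\<lambda>x y::real. x^3+x^2*y+x*y^2+y^3 + a*(x+y) + b)"
  have Qd: "(x-y)*Q x y = (x^4 + a*x^2 + b*x + e) - (y^4 + a*y^2 + b*y + e)" for x y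
    unfolding Q_def by (simp add: algebra_simps power2_eq_square power3_eq_cube power4_eq_xxxx)
  have q12: "Q r1 r2 = 0" using Qd[of r1 r2] p d by simp
  have q13: "Q r1 r3 = 0" using Qd[of r1 r3] p d by simp
  have q14: "Q r1 r4 = 0" using Qd[of r1 r4] p d by simp
  have q23: "Q r2 r3 = 0" using Qd[of r2 r3] p d by simp
  have q24: "Q r2 r4 = 0" using Qd[of r2 r4] p d by simp
  have q34: "Q r3 r4 = 0" using Qd[of r3 r4] p d by simp
  define T where "T = (\<lambda>x y z::real. x^2+y^2+z^2+x*y+x*z+y*z + a)"
  have Td: "(y-z)*T x y z = Q x y - Q x z" for x y z
    unfolding Q_def T_def by (simp add: algebra_simps power2_eq_square power3_eq_cube)
  have t123: "T r1 r2 r3 = 0" using Td[of r2 r3 r1] q12 q13 d by simp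
  have t124: "T r1 r2 r4 = 0" using Td[of r2 r4 r1] q12 q14 d by simp
  have t134: "T r1 r3 r4 = 0" using Td[of r3 r4 r1] q13 q14 d by simp
  have t234: "T r2 r3 r4 = 0" using Td[of r3 r4 r2] q23 q24 d by simp
  have sd: "(r3-r4)*(r1+r2+r3+r4) = T r1 r2 r3 - T r1 r2 r4"
    unfolding T_def by (simp add: algebra_simps power2_eq_square)
  have s: "r1+r2+r3+r4 = 0" using sd t123 t124 d by simp
  have e1: "4*r1^3+2*a*r1+b = (r1-r2)*(r1-r3)*(r1-r4)"
    using q12 t123 s unfolding Q_def T_def by algebra
  have e2: "4*r2^3+2*a*r2+b = (r2-r1)*(r2-r3)*(r2-r4)"
    using q12 t123 s unfolding Q_def T_def by algebra
  have e3: "4*r3^3+2*a*r3+b = (r3-r1)*(r3-r2)*(r3-r4)"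
    using q13 t123 s unfolding Q_def T_def by algebra
  have e4: "4*r4^3+2*a*r4+b = (r4-r1)*(r4-r2)*(r4-r3)"
    using q14 t124 s unfolding Q_def T_def by algebra
  have nz: "r1-r2\<noteq>0" "r1-r3\<noteq>0" "r1-r4\<noteq>0" "r2-r3\<noteq>0" "r2-r4\<noteq>0" "r3-r4\<noteq>0"
    using d by auto
  define D where "D = (r1-r2)*(r1-r3)*(r1-r4)*(r2-r3)*(r2-r4)*(r3-r4)"
  have Dnz: "D \<noteq> 0" unfolding D_def using nz by simp
  have a1: "D * (1/((r1-r2)*(r1-r3)*(r1-r4))) = (r2-r3)*(r2-r4)*(r3-r4)"
  proof -
    have "D = ((r1-r2)*(r1-r3)*(r1-r4)) * ((r2-r3)*(r2-r4)*(r3-r4))" unfolding D_def by algebra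
    moreover have "(r1-r2)*(r1-r3)*(r1-r4) \<noteq> 0" using nz by simp
    ultimately show ?thesis by simp
  qed
  have a2: "D * (1/((r2-r1)*(r2-r3)*(r2-r4))) = -((r1-r3)*(r1-r4)*(r3-r4))"
  proof -
    have "D = ((r2-r1)*(r2-r3)*(r2-r4)) * (-((r1-r3)*(r1-r4)*(r3-r4)))" unfolding D_def by algebra
    moreover have "(r2-r1)*(r2-r3)*(r2-r4) \<noteq> 0" using nz by simp
    ultimately show ?thesis by simp
  qed
  have a3: "D * (1/((r3-r1)*(r3-r2)*(r3-r4))) = (r1-r2)*(r1-r4)*(r2-r4)"
  proof -
    have "D = ((r3-r1)*(r3-r2)*(r3-r4)) * ((r1-r2)*(r1-r4)*(r2-r4))" unfolding D_def by algebra
    moreover have "(r3-r1)*(r3-r2)*(r3-r4) \<noteq> 0" using nz by simp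
    ultimately show ?thesis by simp
  qed
  have a4: "D * (1/((r4-r1)*(r4-r2)*(r4-r3))) = -((r1-r2)*(r1-r3)*(r2-r3))"
  proof -
    have "D = ((r4-r1)*(r4-r2)*(r4-r3)) * (-((r1-r2)*(r1-r3)*(r2-r3)))" unfolding D_def by algebra
    moreover have "(r4-r1)*(r4-r2)*(r4-r3) \<noteq> 0" using nz by simp
    ultimately show ?thesis by simp
  qed
  have "D * (1/((r1-r2)*(r1-r3)*(r1-r4)) + 1/((r2-r1)*(r2-r3)*(r2-r4)) + 1/((r3-r1)*(r3-r2)*(r3-r4)) + 1/((r4-r1)*(r4-r2)*(r4-r3))) = 0"
    unfolding distrib_left a1 a2 a3 a4 by algebra
  then show ?thesis unfolding e1 e2 e3 e4 using Dnz by simp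
qed

lemma pt:
  fixes c s1 s2 u v :: real
  assumes c: "c \<noteq> 0" and h: "eta c (u,v) = (s1,s2)" and j: "jac_det c (u,v) \<noteq> 0"
  shows "u^4 + (-2*s1)*u^2 + (8*c^3)*u + (s1^2-4*c^2*s2) = 0"
    and "1 / jac_det c (u,v) = (-2*c) * (1/(4*u^3 + 2*(-2*s1)*u + 8*c^3))"
    and "v = (s1 - u^2)/(2*c)"
proof -
  have h1: "u^2+2*c*v = s1" and h2: "v^2+2*c*u = s2" using h by (auto simp: eta_def)
  show "u^4 + (-2*s1)*u^2 + (8*c^3)*u + (s1^2-4*c^2*s2) = 0"
    unfolding h1[symmetric] h2[symmetric]
    by algebra
  have jd: "jac_det c (u,v) = 4*u*v - 4*c^2" by (simp add: jac_det_def power2_eq_square)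
  have r: "2*c*(4*u*v - 4*c^2) = -(4*u^3 + 2*(-2*s1)*u + 8*c^3)" unfolding h1[symmetric] by algebra
  have jn: "4*u*v - 4*c^2 \<noteq> 0" using j jd by simp
  show "1 / jac_det c (u,v) = (-2*c) * (1/(4*u^3 + 2*(-2*s1)*u + 8*c^3))"
  proof -
    have e: "4*u^3 + 2*(-2*s1)*u + 8*c^3 = -(2*c*(4*u*v - 4*c^2))" using r by linarith
    show ?thesis unfolding jd e using c jn by simp
  qed
  show "v = (s1 - u^2)/(2*c)" using h1 c by (simp add: field_simps)
qed

theorem theorem1:
  fixes c :: real and y :: "real \<times> real"
  assumes "c \<noteq> 0"
    and "finite {x. eta c x = y}"
    and "card {x. eta c x = y} = 4"
    and "\<forall>x. eta c x = y \<longrightarrow> jac_det c x \<noteq> 0"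
  shows "(\<Sum>x\<in>{x. eta c x = y}. 1 / jac_det c x) = 0"
proof -
  obtain s1 s2 where y: "y = (s1,s2)" by (cases y)
  define S where "S = {x. eta c x = y}"
  have "card S = Suc 3" using assms(3) S_def by simp
  then obtain p1 B where S1: "S = insert p1 B" "p1 \<notin> B" "card B = 3"
    unfolding card_Suc_eq by blast
  then obtain p2 p3 p4 where B: "B = {p2,p3,p4}" "p2 \<noteq> p3" "p3 \<noteq> p4" "p2 \<noteq> p4"
    using S1(3) unfolding card_3_iff by blast
  obtain u1 v1 where P1: "p1 = (u1,v1)" by (cases p1)
  obtain u2 v2 where P2: "p2 = (u2,v2)" by (cases p2)
  obtain u3 v3 where P3: "p3 = (u3,v3)" by (cases p3)
  obtain u4 v4 where P4: "p4 = (u4,v4)" by (cases p4)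
  have inS: "p1 \<in> S" "p2 \<in> S" "p3 \<in> S" "p4 \<in> S" using S1 B by auto
  have E: "eta c (u1,v1) = (s1,s2)" "eta c (u2,v2) = (s1,s2)" "eta c (u3,v3) = (s1,s2)" "eta c (u4,v4) = (s1,s2)"
    using inS P1 P2 P3 P4 y S_def by auto
  have J: "jac_det c (u1,v1) \<noteq> 0" "jac_det c (u2,v2) \<noteq> 0" "jac_det c (u3,v3) \<noteq> 0" "jac_det c (u4,v4) \<noteq> 0"
    using E assms(4) y by auto
  note q1 = pt[OF assms(1) E(1) J(1)] and q2 = pt[OF assms(1) E(2) J(2)]
   and q3 = pt[OF assms(1) E(3) J(3)] and q4 = pt[OF assms(1) E(4) J(4)]
  have dp: "p1 \<noteq> p2" "p1 \<noteq> p3" "p1 \<noteq> p4" "p2 \<noteq> p3" "p2 \<noteq> p4" "p3 \<noteq> p4"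
    using S1 B by auto
  have du: "u1 \<noteq> u2" "u1 \<noteq> u3" "u1 \<noteq> u4" "u2 \<noteq> u3" "u2 \<noteq> u4" "u3 \<noteq> u4"
    using dp P1 P2 P3 P4 q1(3) q2(3) q3(3) q4(3) by auto
  have "(\<Sum>x\<in>S. 1 / jac_det c x) = 1 / jac_det c p1 + 1 / jac_det c p2 + 1 / jac_det c p3 + 1 / jac_det c p4"
    using S1 B dp by simp
  also have "\<dots> = (-2*c) * (1/(4*u1^3 + 2*(-2*s1)*u1 + 8*c^3) + 1/(4*u2^3 + 2*(-2*s1)*u2 + 8*c^3)
      + 1/(4*u3^3 + 2*(-2*s1)*u3 + 8*c^3) + 1/(4*u4^3 + 2*(-2*s1)*u4 + 8*c^3))"
    unfolding P1 P2 P3 P4 q1(2) q2(2) q3(2) q4(2) by (simp add: algebra_simps)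
  also have "\<dots> = 0"
    using key[OF du q1(1) q2(1) q3(1) q4(1)] by simp
  finally show ?thesis unfolding S_def .
qed
end
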